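(* Let $\mathfrak g=\mathfrak g(\mathfrak l,V,\mathfrak z,\beta)$ be admissible such that the representation of $\mathfrak l$ on $V$ is faithful. For every pointed closed convex cone $C_{\mathfrak z}\subseteq\mathfrak z$, the set $$W_{\mathfrak l}(C_{\mathfrak z})=\{x\in\mathfrak l:\ \forall v\in V:\ [v,[v,x]]\in C_{\mathfrak z}\}$$ is a pointed $\operatorname{Inn}(\mathfrak l)$-invariant closed convex cone in $\mathfrak l$.
   Context: In $\mathfrak g(\mathfrak l,V,\mathfrak z,\beta)=\mathfrak z\oplus V\oplus\mathfrak l$ the bracket is $[(z,v,x),(z',v',x')]=(\beta(v,v'),x.v'-x'.v,[x,x'])$, so for $v\in V$, $x\in\mathfrak l$: $[v,[v,x]]=\beta(x.v,v)$. Here $\mathfrak l$ is reductive, $V$ an $\mathfrak l$-module, $\beta$ skew-symmetric and $\mathfrak l$-invariant. $\mathfrak g$ is admissible if it contains an $\operatorname{Inn}(\mathfrak g)$-invariant pointed (no affine lines) generating (spanning) closed convex subset; standing fact: then $\mathfrak z=\mathfrak z(\mathfrak g)$ and there exist $f\in\mathfrak z^*$, $y\in\mathfrak l$ with $f\circ\beta$ symplectic and $v\mapsto f(\beta(y.v,v))$ positive definite (in particular for each $0\ne v\in V$ there is $w$ with $\beta(v,w)\ne0$). *)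

theory Defs
  imports "HOL-Analysis.Analysis"
begin

definition lie_algebra :: "('a::euclidean_space \<Rightarrow> 'a \<Rightarrow> 'a) \<Rightarrow> bool" where
  "lie_algebra br \<longleftrightarrow> bilinear br \<and> (\<forall>x. br x x = 0) \<and>
     (\<forall>x y z. br x (br y z) + br y (br z x) + br z (br x y) = 0)"

definition lie_ideal :: "('a::euclidean_space \<Rightarrow> 'a \<Rightarrow> 'a) \<Rightarrow> 'a set \<Rightarrow> bool" where
  "lie_ideal br I \<longleftrightarrow> subspace I \<and> (\<forall>x y. y \<in> I \<longrightarrow> br x y \<in> I)"

text \<open>Reductive: the adjoint representation is semisimple, i.e. every ideal has a
  complementary ideal.\<close>
definition reductive :: "('a::euclidean_space \<Rightarrow> 'a \<Rightarrow> 'a) \<Rightarrow> bool" where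
  "reductive br \<longleftrightarrow> lie_algebra br \<and>
     (\<forall>I. lie_ideal br I \<longrightarrow> (\<exists>J. lie_ideal br J \<and> I \<inter> J = {0} \<and>
          {a + b | a b. a \<in> I \<and> b \<in> J} = UNIV))"

definition lie_module :: "('l::euclidean_space \<Rightarrow> 'l \<Rightarrow> 'l) \<Rightarrow> ('l \<Rightarrow> 'v::euclidean_space \<Rightarrow> 'v) \<Rightarrow> bool" where
  "lie_module br act \<longleftrightarrow> bilinear act \<and>
     (\<forall>x y v. act (br x y) v = act x (act y v) - act y (act x v))"

definition faithful :: "('l::euclidean_space \<Rightarrow> 'v::euclidean_space \<Rightarrow> 'v) \<Rightarrow> bool" where
  "faithful act \<longleftrightarrow> (\<forall>x. (\<forall>v. act x v = 0) \<longrightarrow> x = 0)"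

definition invariant_skew_form ::
  "('l::euclidean_space \<Rightarrow> 'v::euclidean_space \<Rightarrow> 'v) \<Rightarrow> ('v \<Rightarrow> 'v \<Rightarrow> 'z::euclidean_space) \<Rightarrow> bool" where
  "invariant_skew_form act \<beta> \<longleftrightarrow> bilinear \<beta> \<and> (\<forall>v w. \<beta> v w = - \<beta> w v) \<and>
     (\<forall>x v w. \<beta> (act x v) w + \<beta> v (act x w) = 0)"

text \<open>The bracket of g(l,V,z,beta) = z + V + l.\<close>
definition gbr ::
  "('l \<Rightarrow> 'l \<Rightarrow> 'l) \<Rightarrow> ('l \<Rightarrow> 'v \<Rightarrow> 'v::real_vector) \<Rightarrow> ('v \<Rightarrow> 'v \<Rightarrow> 'z)
    \<Rightarrow> 'z \<times> 'v \<times> 'l \<Rightarrow> 'z \<times> 'v \<times> 'l \<Rightarrow> 'z \<times> 'v \<times> 'l" where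
  "gbr br act \<beta> p q = (case p of (z, v, x) \<Rightarrow> case q of (z', v', x') \<Rightarrow>
      (\<beta> v v', act x v' - act x' v, br x x'))"

text \<open>exp(ad x) as the (always convergent) exponential series.\<close>
definition exp_ad :: "('a::euclidean_space \<Rightarrow> 'a \<Rightarrow> 'a) \<Rightarrow> 'a \<Rightarrow> 'a \<Rightarrow> 'a" where
  "exp_ad br x y = (\<Sum>n. (1 / fact n) *\<^sub>R ((br x ^^ n) y))"

text \<open>Inn: the group generated by all exp(ad x) (closed under inverses since
  exp(ad x)^(-1) = exp(ad(-x))).\<close>
inductive_set Inn :: "('a::euclidean_space \<Rightarrow> 'a \<Rightarrow> 'a) \<Rightarrow> ('a \<Rightarrow> 'a) set"
  for br where
  Inn_id: "id \<in> Inn br"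
| Inn_step: "\<phi> \<in> Inn br \<Longrightarrow> exp_ad br x \<circ> \<phi> \<in> Inn br"

definition Inn_invariant :: "('a::euclidean_space \<Rightarrow> 'a \<Rightarrow> 'a) \<Rightarrow> 'a set \<Rightarrow> bool" where
  "Inn_invariant br S \<longleftrightarrow> (\<forall>\<phi>\<in>Inn br. \<phi> ` S \<subseteq> S)"

definition no_lines :: "'a::real_vector set \<Rightarrow> bool" where
  "no_lines S \<longleftrightarrow> \<not> (\<exists>p d. d \<noteq> 0 \<and> (\<forall>t::real. p + t *\<^sub>R d \<in> S))"

definition pointed_cone :: "'a::real_vector set \<Rightarrow> bool" where
  "pointed_cone C \<longleftrightarrow> convex_cone C \<and> C \<inter> uminus ` C = {0}"

definition admissible :: "('a::euclidean_space \<Rightarrow> 'a \<Rightarrow> 'a) \<Rightarrow> bool" where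
  "admissible br \<longleftrightarrow> (\<exists>C. C \<noteq> {} \<and> closed C \<and> convex C \<and> no_lines C \<and> span C = UNIV
       \<and> Inn_invariant br C)"

definition W_l ::
  "('l \<Rightarrow> 'l \<Rightarrow> 'l) \<Rightarrow> ('l \<Rightarrow> 'v \<Rightarrow> 'v::real_vector) \<Rightarrow> ('v \<Rightarrow> 'v \<Rightarrow> 'z::real_vector)
     \<Rightarrow> 'z set \<Rightarrow> 'l::real_vector set" where
  "W_l br act \<beta> Cz = {x. \<forall>v. gbr br act \<beta> (0, v, 0) (gbr br act \<beta> (0, v, 0) (0, 0, x))
                              \<in> (\<lambda>c. (c, 0, 0)) ` Cz}"

end

theory Submission imports Defs begin


lemma funpow_linear_bound:
  fixes f :: "'a::real_normed_vector \<Rightarrow> 'a"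
  assumes "\<And>v. norm (f v) \<le> norm v * K" "K \<ge> 0"
  shows "norm ((f^^n) x) \<le> K^n * norm x"
proof (induction n)
  case 0 then show ?case by simp
next
  case (Suc n)
  have "norm ((f^^Suc n) x) \<le> norm ((f^^n) x) * K" using assms(1) by simp
  also have "\<dots> \<le> K^n * norm x * K" using Suc assms(2) by (simp add: mult_right_mono)
  finally show ?case by (simp add: algebra_simps)
qed

lemma exp_series_summable:
  fixes f :: "'a::euclidean_space \<Rightarrow> 'a"
  assumes "linear f"
  shows "summable (\<lambda>n. (t^n / fact n) *\<^sub>R (f^^n) x)"
proof -
  have bl: "bounded_linear f" using assms linear_conv_bounded_linear by blast
  obtain K where K: "K > 0" "\<And>v. norm (f v) \<le> norm v * K"
    using bounded_linear.pos_bounded[OF bl] by blast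
  have s: "summable (\<lambda>n. inverse (fact n) * (\<bar>t\<bar> * K)^n * norm x)"
    using summable_exp[of "\<bar>t\<bar> * K"] by (rule summable_mult2)
  show ?thesis
  proof (rule summable_comparison_test[OF _ s], intro exI allI impI)
    fix n :: nat
    have "norm ((t^n / fact n) *\<^sub>R (f^^n) x) = (\<bar>t\<bar>^n / fact n) * norm ((f^^n) x)"
      by (simp add: power_abs)
    also have "\<dots> \<le> (\<bar>t\<bar>^n / fact n) * (K^n * norm x)"
      by (rule mult_left_mono[OF funpow_linear_bound[OF K(2)]]) (use K in auto)
    also have "\<dots> = inverse (fact n) * (\<bar>t\<bar> * K)^n * norm x"
      by (simp add: power_mult_distrib field_simps)
    finally show "norm ((t^n / fact n) *\<^sub>R (f^^n) x) \<le> inverse (fact n) * (\<bar>t\<bar> * K)^n * norm x" .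
  qed
qed

lemma exp_series_deriv:
  fixes f :: "'a::euclidean_space \<Rightarrow> 'a"
  assumes "linear f"
  shows "((\<lambda>t. \<Sum>n. (t^n / fact n) *\<^sub>R (f^^n) x) has_vector_derivative
          f (\<Sum>n. (t^n / fact n) *\<^sub>R (f^^n) x)) (at t)"
proof -
  have bl: "bounded_linear f" using assms linear_conv_bounded_linear by blast
  define g where "g = (\<lambda>t. \<Sum>n. (t^n / fact n) *\<^sub>R (f^^n) x)"
  have hb: "((\<lambda>s. g s \<bullet> b) has_field_derivative (f (g t) \<bullet> b)) (at t)" for b :: 'a
  proof -
    define c where "c = (\<lambda>n. ((f^^n) x \<bullet> b) / fact n)"
    have eq: "g s \<bullet> b = (\<Sum>n. c n * s^n)" for s
    proof -
      have "g s \<bullet> b = (\<Sum>n. ((s^n / fact n) *\<^sub>R (f^^n) x) \<bullet> b)"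
        unfolding g_def by (rule bounded_linear.suminf[OF bounded_linear_inner_left exp_series_summable[OF assms]])
      then show ?thesis by (simp add: c_def field_simps)
    qed
    have sm: "summable (\<lambda>n. c n * y^n)" for y
    proof -
      have "summable (\<lambda>n. ((y^n / fact n) *\<^sub>R (f^^n) x) \<bullet> b)"
        by (rule bounded_linear.summable[OF bounded_linear_inner_left exp_series_summable[OF assms]])
      then show ?thesis by (simp add: c_def field_simps)
    qed
    have d: "((\<lambda>s. \<Sum>n. c n * s^n) has_field_derivative (\<Sum>n. diffs c n * t^n)) (at t)"
      by (rule termdiffs_strong_converges_everywhere[OF sm])
    have "f (g t) \<bullet> b = (\<Sum>n. f ((t^n / fact n) *\<^sub>R (f^^n) x)) \<bullet> b"
      unfolding g_def by (simp add: bounded_linear.suminf[OF bl exp_series_summable[OF assms]])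
    also have "\<dots> = (\<Sum>n. f ((t^n / fact n) *\<^sub>R (f^^n) x) \<bullet> b)"
      apply (rule bounded_linear.suminf[OF bounded_linear_inner_left])
      apply (rule bounded_linear.summable[OF bl exp_series_summable[OF assms]])
      done
    also have "\<dots> = (\<Sum>n. diffs c n * t^n)"
    proof (rule suminf_cong)
      fix n
      have "f ((t^n / fact n) *\<^sub>R (f^^n) x) = (t^n / fact n) *\<^sub>R (f^^Suc n) x"
        using linear_scale[OF assms] by simp
      moreover have "diffs c n = (f ((f^^n) x) \<bullet> b) / fact n"
        unfolding diffs_def c_def by (simp add: fact_Suc)
      ultimately show "f ((t^n / fact n) *\<^sub>R (f^^n) x) \<bullet> b = diffs c n * t^n"
        by simp
    qed
    finally show ?thesis using d eq by simp
  qed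
  have "((\<lambda>s. \<Sum>b\<in>Basis. (g s \<bullet> b) *\<^sub>R b) has_vector_derivative (\<Sum>b\<in>Basis. (f (g t) \<bullet> b) *\<^sub>R b)) (at t)"
    apply (rule has_vector_derivative_sum)
    using has_vector_derivative_scaleR[OF hb has_vector_derivative_const] by simp
  then have "(g has_vector_derivative f (g t)) (at t)" by (simp add: euclidean_representation)
  then show ?thesis unfolding g_def .
qed

lemma exp_series_zero: "(\<Sum>n. ((0::real)^n / fact n) *\<^sub>R (f^^n) (x::'a::real_normed_vector)) = x"
proof -
  have "(\<lambda>n. ((0::real)^n / fact n) *\<^sub>R (f^^n) x) sums (\<Sum>n\<in>{0}. ((0::real)^n / fact n) *\<^sub>R (f^^n) x)"
    by (rule sums_finite) auto
  then show ?thesis by (simp add: sums_iff)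
qed

lemma exp_nil2:
  fixes f :: "'a::real_normed_vector \<Rightarrow> 'a"
  assumes "f 0 = 0" "f (f p) = 0"
  shows "(\<Sum>n. (1 / fact n) *\<^sub>R ((f^^n) p)) = p + f p"
proof -
  have z: "(f^^m) 0 = 0" for m by (induction m) (auto simp: assms)
  have "(\<lambda>n. (1 / fact n) *\<^sub>R ((f^^n) p)) sums (\<Sum>n\<in>{0,1}. (1 / fact n) *\<^sub>R ((f^^n) p))"
  proof (rule sums_finite)
    fix n :: nat assume "n \<notin> {0,1}"
    then have n2: "n \<ge> 2" by auto
    define m where "m = n - 2"
    have "n = Suc (Suc m)" using n2 unfolding m_def by arith
    then have "(f^^n) p = (f^^m) (f (f p))" by (simp add: funpow_Suc_right del: funpow.simps)
    then show "(1 / fact n) *\<^sub>R ((f^^n) p) = 0" by (simp add: assms z)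
  qed simp
  then show ?thesis by (simp add: sums_iff)
qed



lemma gbr_simp:
  "gbr br act \<beta> (z,v,x) (z',v',x') = (\<beta> v v', act x v' - act x' v, br x x')"
  by (simp add: gbr_def)

lemma W_mem:
  assumes ba: "bilinear act" and bb: "bilinear \<beta>" and bbr: "bilinear br"
    and sk: "\<forall>v w. \<beta> v w = - \<beta> w v"
  shows "x \<in> W_l br act \<beta> Cz \<longleftrightarrow> (\<forall>v. \<beta> (act x v) v \<in> Cz)"
proof -
  have "gbr br act \<beta> (0, v, 0) (gbr br act \<beta> (0, v, 0) (0, 0, x)) = (\<beta> (act x v) v, 0, 0)" for v
  proof -
    have "- \<beta> v (act x v) = \<beta> (act x v) v" using sk[rule_format, of v "act x v"] by simp
    then show ?thesis
      by (simp add: gbr_simp bilinear_lzero[OF ba] bilinear_rzero[OF ba] bilinear_lzero[OF bbr]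
        bilinear_rzero[OF bbr] bilinear_rzero[OF bb] bilinear_rneg[OF bb] bilinear_rneg[OF ba])
  qed
  then show ?thesis unfolding W_l_def by auto
qed

lemma gbr_scale:
  assumes ba: "bilinear act" and bb: "bilinear \<beta>" and bbr: "bilinear br"
  shows "gbr br act \<beta> (t *\<^sub>R a) q = t *\<^sub>R gbr br act \<beta> a q"
  by (cases a; cases q) (auto simp: gbr_simp bilinear_lmul[OF ba] bilinear_rmul[OF ba]
      bilinear_lmul[OF bb] bilinear_lmul[OF bbr] algebra_simps)

lemma gbr_scale2:
  assumes ba: "bilinear act" and bb: "bilinear \<beta>" and bbr: "bilinear br"
  shows "gbr br act \<beta> a (t *\<^sub>R q) = t *\<^sub>R gbr br act \<beta> a q"
  by (cases a; cases q) (auto simp: gbr_simp bilinear_lmul[OF ba] bilinear_rmul[OF ba]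
      bilinear_rmul[OF bb] bilinear_rmul[OF bbr] algebra_simps)

lemma gbr_zero:
  assumes ba: "bilinear act" and bb: "bilinear \<beta>" and bbr: "bilinear br"
  shows "gbr br act \<beta> a 0 = 0"
  by (cases a) (auto simp: zero_prod_def gbr_simp bilinear_rzero[OF ba] bilinear_lzero[OF ba]
      bilinear_rzero[OF bb] bilinear_rzero[OF bbr])

lemma line_kill:
  fixes G :: "'a::euclidean_space \<Rightarrow> 'a \<Rightarrow> 'a"
  assumes nl: "no_lines C" and inv: "Inn_invariant G C" and p: "p \<in> C"
    and sc: "\<And>t q. G (t *\<^sub>R a) q = t *\<^sub>R G a q" and z: "G a 0 = 0" and sc2: "\<And>t q. G a (t *\<^sub>R q) = t *\<^sub>R G a q"
    and nil: "G a (G a p) = 0"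
  shows "G a p = 0"
proof -
  have ex: "exp_ad G (t *\<^sub>R a) p = p + t *\<^sub>R G a p" for t
    unfolding exp_ad_def
    by (rule trans[OF exp_nil2]) (auto simp: sc sc2 z nil)
  moreover have "exp_ad G (t *\<^sub>R a) \<circ> id \<in> Inn G" for t
    by (rule Inn_step[OF Inn_id])
  ultimately have "p + t *\<^sub>R G a p \<in> C" for t
  proof -
    have "(exp_ad G (t *\<^sub>R a) \<circ> id) ` C \<subseteq> C"
      using inv Inn_step[OF Inn_id] unfolding Inn_invariant_def by blast
    then have "exp_ad G (t *\<^sub>R a) p \<in> C" using p by auto
    then show ?thesis using ex by simp
  qed
  then show ?thesis using nl unfolding no_lines_def by blast
qed



lemma W_inv_step:
  fixes br :: "'l::euclidean_space \<Rightarrow> 'l \<Rightarrow> 'l"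
    and act :: "'l \<Rightarrow> 'v::euclidean_space \<Rightarrow> 'v"
    and \<beta> :: "'v \<Rightarrow> 'v \<Rightarrow> 'z::euclidean_space"
  assumes ba: "bilinear act" and bb: "bilinear \<beta>" and bbr: "bilinear br"
    and lm: "\<forall>x y v. act (br x y) v = act x (act y v) - act y (act x v)"
    and inv: "\<forall>x v w. \<beta> (act x v) w + \<beta> v (act x w) = 0"
    and hx: "\<forall>v. \<beta> (act x v) v \<in> Cz"
  shows "\<beta> (act (exp_ad br y x) v) v \<in> Cz"
proof -
  have lA: "linear (br y)" using bbr unfolding bilinear_def by auto
  have lB: "linear (act y)" using ba unfolding bilinear_def by auto
  define z where "z = (\<lambda>t. \<Sum>n. (t^n / fact n) *\<^sub>R (br y^^n) x)"
  define g where "g = (\<lambda>t. \<Sum>n. (t^n / fact n) *\<^sub>R (act y^^n) v)"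
  define u where "u = (\<lambda>t. g (t - 1))"
  have dz: "(z has_vector_derivative br y (z t)) (at t)" for t
    unfolding z_def by (rule exp_series_deriv[OF lA])
  have du: "(u has_vector_derivative act y (u t)) (at t)" for t
  proof -
    have "((g \<circ> (\<lambda>t. t - 1)) has_vector_derivative (1 *\<^sub>R act y (g (t - 1)))) (at t)"
      apply (rule vector_diff_chain_at)
       apply (simp add: has_vector_derivative_diff_const)
      unfolding g_def by (rule exp_series_deriv[OF lB])
    then show ?thesis by (simp add: u_def o_def)
  qed
  have bba: "bounded_bilinear act" using ba bilinear_conv_bounded_bilinear by blast
  have bbb: "bounded_bilinear \<beta>" using bb bilinear_conv_bounded_bilinear by blast
  define k where "k = (\<lambda>t. \<beta> (act (z t) (u t)) (u t))"
  have dk: "(k has_vector_derivative 0) (at t)" for t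
  proof -
    have dp: "((\<lambda>t. act (z t) (u t)) has_vector_derivative
        (act (z t) (act y (u t)) + act (br y (z t)) (u t))) (at t)"
      by (rule bounded_bilinear.has_vector_derivative[OF bba dz du])
    have "(k has_vector_derivative (\<beta> (act (z t) (u t)) (act y (u t))
        + \<beta> (act (z t) (act y (u t)) + act (br y (z t)) (u t)) (u t))) (at t)"
      unfolding k_def by (rule bounded_bilinear.has_vector_derivative[OF bbb dp du])
    moreover have "\<beta> (act (z t) (u t)) (act y (u t))
        + \<beta> (act (z t) (act y (u t)) + act (br y (z t)) (u t)) (u t) = 0"
      using lm inv[rule_format, of y "act (z t) (u t)" "u t"]
      by (simp add: bilinear_ladd[OF bb] algebra_simps)
    ultimately show ?thesis by simp
  qed
  obtain c where c: "\<forall>t\<in>UNIV. k t = c"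
    apply (rule exE[OF has_derivative_zero_constant[OF convex_UNIV, of k]])
    using dk unfolding has_vector_derivative_def by auto
  have "k 1 = k 0" using c by auto
  moreover have "z 1 = exp_ad br y x" unfolding z_def exp_ad_def by simp
  moreover have "u 1 = v"
  proof -
    have "g 0 = v" unfolding g_def by (rule exp_series_zero)
    then show ?thesis by (simp add: u_def)
  qed
  moreover have "z 0 = x" unfolding z_def by (rule exp_series_zero)
  ultimately have "\<beta> (act (exp_ad br y x) v) v = \<beta> (act x (u 0)) (u 0)"
    unfolding k_def by simp
  then show ?thesis using hx by simp
qed



lemma kernel_UNIV:
  fixes L :: "'a::real_vector \<Rightarrow> 'b::real_vector"
  assumes "linear L" "span C = UNIV" "\<forall>p\<in>C. L p = 0"
  shows "L q = 0"
proof -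
  have "subspace {p. L p = 0}"
    unfolding subspace_def using assms(1) by (auto simp: linear_add linear_scale linear_0)
  then have "span C \<subseteq> {p. L p = 0}" using assms(3) by (intro span_minimal) auto
  then show ?thesis using assms(2) by auto
qed

theorem lemma3p16:
  fixes br :: "'l::euclidean_space \<Rightarrow> 'l \<Rightarrow> 'l"
    and act :: "'l \<Rightarrow> 'v::euclidean_space \<Rightarrow> 'v"
    and \<beta> :: "'v \<Rightarrow> 'v \<Rightarrow> 'z::euclidean_space"
    and Cz :: "'z set"
  assumes "reductive br"
    and "lie_module br act"
    and "invariant_skew_form act \<beta>"
    and "admissible (gbr br act \<beta>)"
    and "faithful act"
    and "closed Cz" and "pointed_cone Cz"
  shows "closed (W_l br act \<beta> Cz) \<and> pointed_cone (W_l br act \<beta> Cz)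
         \<and> Inn_invariant br (W_l br act \<beta> Cz)"
proof -
  from assms(2) have ba: "bilinear act"
    and lm: "\<forall>x y v. act (br x y) v = act x (act y v) - act y (act x v)"
    unfolding lie_module_def by blast+
  from assms(3) have bb: "bilinear \<beta>" and sk: "\<forall>v w. \<beta> v w = - \<beta> w v"
    and inv: "\<forall>x v w. \<beta> (act x v) w + \<beta> v (act x w) = 0"
    unfolding invariant_skew_form_def by blast+
  have lie: "lie_algebra br" using assms(1)[unfolded reductive_def] by (rule conjunct1)
  have red: "\<forall>I. lie_ideal br I \<longrightarrow> (\<exists>J. lie_ideal br J \<and> I \<inter> J = {0} \<and>
          {a + b | a b. a \<in> I \<and> b \<in> J} = UNIV)"
    using assms(1)[unfolded reductive_def] by (rule conjunct2)
  from lie have bbr: "bilinear br" and alt: "\<forall>x. br x x = 0" unfolding lie_algebra_def by blast+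
  have antis: "br a b = - br b a" for a b
  proof -
    have e: "br (a + b) (a + b) = 0" "br a a = 0" "br b b = 0" using alt by blast+
    have "br (a + b) (a + b) = br a a + br a b + (br b a + br b b)"
      by (simp add: bilinear_ladd[OF bbr] bilinear_radd[OF bbr])
    then have "br a b + br b a = 0" using e by simp
    then show ?thesis by (simp add: eq_neg_iff_add_eq_0)
  qed
  note Wm = W_mem[OF ba bb bbr sk]
  from assms(7) have cc: "convex_cone Cz" and pt: "Cz \<inter> uminus ` Cz = {0}"
    unfolding pointed_cone_def by blast+
  have c0: "0 \<in> Cz" using cc convex_cone_iff by blast
  define W where "W = W_l br act \<beta> Cz"
  have Weq: "W = {x. \<forall>v. \<beta> (act x v) v \<in> Cz}"
  proof (rule set_eqI)
    fix x show "x \<in> W \<longleftrightarrow> x \<in> {x. \<forall>v. \<beta> (act x v) v \<in> Cz}"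
      unfolding W_def mem_Collect_eq by (rule Wm)
  qed
  have lin1: "linear (\<lambda>x. \<beta> (act x v) v)" for v
    by (rule linearI) (simp_all add: bilinear_ladd[OF ba] bilinear_ladd[OF bb] bilinear_lmul[OF ba] bilinear_lmul[OF bb])
  have cl: "closed W"
  proof -
    have "W = (\<Inter>v. (\<lambda>x. \<beta> (act x v) v) -` Cz)" unfolding Weq by blast
    moreover have "closed ((\<lambda>x. \<beta> (act x v) v) -` Cz)" for v
      apply (rule continuous_closed_vimage[OF assms(6)])
      apply (rule linear_continuous_at)
      using lin1 linear_conv_bounded_linear by blast
    ultimately show ?thesis by (simp add: closed_INT)
  qed
  have ccW: "convex_cone W"
    unfolding convex_cone_iff
  proof (intro conjI ballI allI impI)
    have "\<beta> (act 0 v) v \<in> Cz" for v using c0 by (simp add: bilinear_lzero[OF ba] bilinear_lzero[OF bb])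
    then show "0 \<in> W" unfolding Weq by blast
  next
    fix x y assume x: "x \<in> W" and y: "y \<in> W"
    have "\<beta> (act (x + y) v) v \<in> Cz" for v
    proof -
      have "\<beta> (act (x + y) v) v = \<beta> (act x v) v + \<beta> (act y v) v"
        by (simp add: bilinear_ladd[OF ba] bilinear_ladd[OF bb])
      moreover have "\<beta> (act x v) v \<in> Cz" "\<beta> (act y v) v \<in> Cz" using x y unfolding Weq by blast+
      ultimately show ?thesis using convex_cone_add[OF cc] by simp
    qed
    then show "x + y \<in> W" unfolding Weq by blast
  next
    fix x and c :: real assume x: "x \<in> W" and c: "0 \<le> c"
    have "\<beta> (act (c *\<^sub>R x) v) v \<in> Cz" for v
    proof -
      have "\<beta> (act (c *\<^sub>R x) v) v = c *\<^sub>R \<beta> (act x v) v"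
        by (simp add: bilinear_lmul[OF ba] bilinear_lmul[OF bb])
      moreover have "\<beta> (act x v) v \<in> Cz" using x unfolding Weq by blast
      ultimately show ?thesis using convex_cone_scaleR[OF cc c] by simp
    qed
    then show "c *\<^sub>R x \<in> W" unfolding Weq by blast
  qed
  have invW: "Inn_invariant br W"
    unfolding Inn_invariant_def
  proof
    fix \<phi> assume "\<phi> \<in> Inn br"
    then show "\<phi> ` W \<subseteq> W"
    proof (induction rule: Inn.induct)
      case Inn_id then show ?case by simp
    next
      case (Inn_step \<phi> y)
      have st: "exp_ad br y ` W \<subseteq> W"
      proof
        fix q assume "q \<in> exp_ad br y ` W"
        then obtain x where xW: "x \<in> W" and q: "q = exp_ad br y x" by blast
        have "\<forall>v. \<beta> (act x v) v \<in> Cz" using xW unfolding Weq by blast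
        then have "\<beta> (act (exp_ad br y x) v) v \<in> Cz" for v
          by (rule W_inv_step[OF ba bb bbr lm inv])
        then show "q \<in> W" unfolding Weq q by blast
      qed
      have "(exp_ad br y \<circ> \<phi>) ` W = exp_ad br y ` (\<phi> ` W)" by (simp add: image_comp)
      also have "\<dots> \<subseteq> exp_ad br y ` W" using Inn_step.IH by (rule image_mono)
      also have "\<dots> \<subseteq> W" by (rule st)
      finally show ?case .
    qed
  qed
  have key: "x = 0" if x0: "\<forall>v. \<beta> (act x v) v = 0" for x
  proof -
    let ?G = "gbr br act \<beta>"
    obtain C where nl: "no_lines C" and spC: "span C = UNIV" and invC: "Inn_invariant ?G C"
      using assms(4) unfolding admissible_def by blast
    have pol: "\<beta> (act x v) w = 0" for v w
    proof -
      have "\<beta> (act x (v + w)) (v + w) = 0" using x0 by blast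
      then have e1: "\<beta> (act x v) w + \<beta> (act x w) v = 0"
        using x0 by (simp add: bilinear_radd[OF ba] bilinear_ladd[OF bb] bilinear_radd[OF bb]) (simp add: add.commute)
      have "\<beta> (act x w) v + \<beta> w (act x v) = 0" using inv by blast
      moreover have "\<beta> w (act x v) = - \<beta> (act x v) w" using sk by blast
      ultimately have "\<beta> (act x w) v = \<beta> (act x v) w" by simp
      with e1 have "\<beta> (act x v) w + \<beta> (act x v) w = 0" by simp
      then have "(2::real) *\<^sub>R \<beta> (act x v) w = 0" by (simp only: scaleR_2)
      then show ?thesis by simp
    qed
    define N where "N = {y. \<forall>v w. \<beta> (act y v) w = 0}"
    have xN: "x \<in> N" unfolding N_def using pol by blast
    have sc: "\<And>a t q. ?G (t *\<^sub>R a) q = t *\<^sub>R ?G a q" using gbr_scale[OF ba bb bbr] by blast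
    have sc2: "\<And>a t q. ?G a (t *\<^sub>R q) = t *\<^sub>R ?G a q" using gbr_scale2[OF ba bb bbr] by blast
    have gz: "\<And>a. ?G a 0 = 0" using gbr_zero[OF ba bb bbr] by blast
    have killN: "act c (act y' v) = 0" if yN: "y' \<in> N" for y' c v
    proof -
      define u where "u = act y' v"
      have uz: "\<beta> u w = 0" for w using yN unfolding N_def u_def by blast
      have "\<forall>p\<in>C. act (snd (snd p)) u = 0"
      proof
        fix p assume pC: "p \<in> C"
        obtain z' v' c' where p: "p = (z', v', c')" by (cases p) auto
        have g1: "?G (0, u, 0) p = (0, - act c' u, 0)"
          using uz by (simp add: p gbr_simp bilinear_lzero[OF ba] bilinear_lzero[OF bbr])
        have "?G (0, u, 0) (?G (0, u, 0) p) = 0"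
          using uz by (simp add: g1 gbr_simp bilinear_lzero[OF ba] bilinear_lzero[OF bbr] zero_prod_def)
        then have "?G (0, u, 0) p = 0"
          by (intro line_kill[OF nl invC pC sc gz sc2])
        then show "act (snd (snd p)) u = 0" using g1 by (simp add: p zero_prod_def)
      qed
      moreover have "linear (\<lambda>p::'z \<times> 'v \<times> 'l. act (snd (snd p)) u)"
        by (rule linearI) (simp_all add: bilinear_ladd[OF ba] bilinear_lmul[OF ba])
      ultimately have "act (snd (snd q)) u = 0" for q :: "'z \<times> 'v \<times> 'l"
        using kernel_UNIV[OF _ spC] by blast
      from this[of "(0, 0, c)"] show ?thesis by (simp add: u_def)
    qed
    have idN: "lie_ideal br N"
      unfolding lie_ideal_def
    proof (intro conjI allI impI)
      show "subspace N" unfolding subspace_def N_def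
        by (simp add: bilinear_lzero[OF ba] bilinear_lzero[OF bb] bilinear_ladd[OF ba] bilinear_ladd[OF bb]
            bilinear_lmul[OF ba] bilinear_lmul[OF bb])
    next
      fix a y assume yN: "y \<in> N"
      have "\<beta> (act (br a y) v) w = 0" for v w
      proof -
        have "\<beta> (act (br a y) v) w = \<beta> (act a (act y v)) w - \<beta> (act y (act a v)) w"
          using lm by (simp add: bilinear_lsub[OF bb])
        moreover have "\<beta> (act y (act a v)) w = 0" using yN unfolding N_def by blast
        moreover have "\<beta> (act a (act y v)) w = - \<beta> (act y v) (act a w)"
          using inv[rule_format, of a "act y v" w] by (simp add: eq_neg_iff_add_eq_0)
        moreover have "\<beta> (act y v) (act a w) = 0" using yN unfolding N_def by blast
        ultimately show ?thesis by simp
      qed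
      then show "br a y \<in> N" unfolding N_def by blast
    qed
    from red[rule_format, OF idN] obtain J where idJ: "lie_ideal br J" and NJ: "N \<inter> J = {0}"
      and NJU: "{a + b | a b. a \<in> N \<and> b \<in> J} = UNIV"
      by blast
    have central: "br c x = 0" for c
    proof -
      have "c \<in> {a + b | a b. a \<in> N \<and> b \<in> J}" by (subst NJU) simp
      then obtain a b where ab: "c = a + b" "a \<in> N" "b \<in> J" by blast
      have "act (br a x) v = 0" for v
        using lm killN[OF ab(2)] killN[OF xN] by simp
      then have "br a x = 0" using assms(5) unfolding faithful_def by blast
      moreover have "br b x = 0"
      proof -
        have "br b x \<in> N" using idN xN unfolding lie_ideal_def by blast
        moreover have "br x b \<in> J" using idJ ab(3) unfolding lie_ideal_def by blast
        then have "- br x b \<in> J" using idJ unfolding lie_ideal_def by (simp add: subspace_neg)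
        then have "br b x \<in> J" using antis[of x b] by simp
        ultimately show ?thesis using NJ by blast
      qed
      ultimately show ?thesis using ab(1) by (simp add: bilinear_ladd[OF bbr])
    qed
    have xx: "act x (act x v) = 0" for v using killN[OF xN] by blast
    have "\<forall>p\<in>C. act x (fst (snd p)) = 0"
    proof
      fix p assume pC: "p \<in> C"
      obtain z' v' c' where p: "p = (z', v', c')" by (cases p) auto
      have bxc: "br x c' = 0" using central[of c'] antis[of x c'] by simp
      have g1: "?G (0, 0, x) p = (0, act x v', 0)"
        using bxc by (simp add: p gbr_simp bilinear_lzero[OF bb] bilinear_rzero[OF ba])
      have "?G (0, 0, x) (?G (0, 0, x) p) = 0"
        using xx by (simp add: g1 gbr_simp bilinear_lzero[OF bb] bilinear_rzero[OF ba]
            bilinear_rzero[OF bbr] zero_prod_def)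
      then have "?G (0, 0, x) p = 0"
        by (intro line_kill[OF nl invC pC sc gz sc2])
      then show "act x (fst (snd p)) = 0" using g1 by (simp add: p zero_prod_def)
    qed
    moreover have "linear (\<lambda>p::'z \<times> 'v \<times> 'l. act x (fst (snd p)))"
      by (rule linearI) (simp_all add: bilinear_radd[OF ba] bilinear_rmul[OF ba])
    ultimately have allq: "act x (fst (snd q)) = 0" for q :: "'z \<times> 'v \<times> 'l"
      using kernel_UNIV[OF _ spC] by blast
    have "act x v = 0" for v using allq[of "(0, v, 0)"] by simp
    then show ?thesis using assms(5) unfolding faithful_def by blast
  qed
  have "W \<inter> uminus ` W = {0}"
  proof
    have z: "0 \<in> W" using ccW convex_cone_iff by blast
    moreover have "0 \<in> uminus ` W" using z by (rule rev_image_eqI) simp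
    ultimately show "{0} \<subseteq> W \<inter> uminus ` W" by blast
  next
    show "W \<inter> uminus ` W \<subseteq> {0}"
    proof
      fix x assume "x \<in> W \<inter> uminus ` W"
      then obtain y where xW: "x \<in> W" and yW: "y \<in> W" and xy: "x = - y" by auto
      have "\<beta> (act x v) v = 0" for v
      proof -
        have "\<beta> (act x v) v \<in> Cz" using xW unfolding Weq by blast
        moreover have "\<beta> (act y v) v \<in> Cz" using yW unfolding Weq by blast
        moreover have "\<beta> (act x v) v = - \<beta> (act y v) v"
          using xy by (simp add: bilinear_lneg[OF ba] bilinear_lneg[OF bb])
        ultimately have "\<beta> (act x v) v \<in> uminus ` Cz" by (intro rev_image_eqI) auto
        with \<open>\<beta> (act x v) v \<in> Cz\<close> have "\<beta> (act x v) v \<in> Cz \<inter> uminus ` Cz" by blast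
        then show ?thesis using pt by auto
      qed
      then show "x \<in> {0}" using key by auto
    qed
  qed
  then show ?thesis using cl ccW invW unfolding W_def[symmetric] pointed_cone_def by blast
qed

end
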